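(* Let $N\le M$ be positive integers, let $\mathcal{H}=\mathcal{H}_A\otimes\mathcal{H}_B$ with $\dim\mathcal{H}_A=N$ and $\dim\mathcal{H}_B=M$, and fix a unit vector $\ket{\phi_0}\in\mathcal{H}$ with local purity $\pi_0=\mathrm{Tr}_A\big[(\mathrm{Tr}_B\ket{\phi_0}\bra{\phi_0})^2\big]$. Let $\ket{\phi}\in\mathcal{H}$ be a random vector whose $NM$ components $X_{i\mu}$ ($1\le i\le N$, $1\le\mu\le M$) in a product basis are independent, identically distributed, circularly symmetric complex Gaussian random variables with $\mathbb{E}[X_{i\mu}]=0$ and $\mathbb{E}[|X_{i\mu}|^2]=1/(NM)$ (so that $\mathbb{E}[X_{i\mu}X_{j\nu}]=0$ and $\mathbb{E}[X_{i\mu}X^*_{j\nu}]=\delta_{ij}\delta_{\mu\nu}/(NM)$). For $\epsilon\in[0,1]$ define $\ket{\psi}=\epsilon\ket{\phi_0}+\sqrt{1-\epsilon^2}\,\ket{\phi}$, $\rho_A=\mathrm{Tr}_B\ket{\psi}\bra{\psi}$ and $\pi_{AB}(\ket{\psi})=\mathrm{Tr}_A\rho_A^2$. Then $$\mathbb{E}\big[\pi_{AB}(\ket{\psi})\big]=\epsilon^4\pi_0+(1-\epsilon^4)\,\frac{M+N}{MN}.$$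
   Context: $\mathrm{Tr}_B$ denotes the partial trace over the factor $\mathcal{H}_B$; $\ket{\psi}\bra{\psi}$ is the rank-one operator associated with $\ket{\psi}$ (which is not normalized in general). The expectation is over the Gaussian vector $\ket{\phi}$, with $\ket{\phi_0}$ and $\epsilon$ fixed. *)

theory Defs
  imports "HOL-Probability.Probability"
begin

(* A vector in H_A (x) H_B (dim N, dim M) is represented by its components
   psi i mu in a product basis, 0 <= i < N, 0 <= mu < M. *)

definition sqnorm :: "nat \<Rightarrow> nat \<Rightarrow> (nat \<Rightarrow> nat \<Rightarrow> complex) \<Rightarrow> real" where
  "sqnorm N M psi = (\<Sum>i<N. \<Sum>mu<M. (cmod (psi i mu))\<^sup>2)"

definition ptrace_B :: "nat \<Rightarrow> (nat \<Rightarrow> nat \<Rightarrow> complex) \<Rightarrow> nat \<Rightarrow> nat \<Rightarrow> complex" where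
  "ptrace_B M psi i j = (\<Sum>mu<M. psi i mu * cnj (psi j mu))"

definition local_purity :: "nat \<Rightarrow> nat \<Rightarrow> (nat \<Rightarrow> nat \<Rightarrow> complex) \<Rightarrow> complex" where
  "local_purity N M psi = (\<Sum>i<N. \<Sum>j<N. ptrace_B M psi i j * ptrace_B M psi j i)"

(* Z is a circularly symmetric complex Gaussian with mean 0 and E|Z|^2 = v:
   real and imaginary parts independent, each N(0, v/2). *)
definition circ_gaussian :: "'a measure \<Rightarrow> ('a \<Rightarrow> complex) \<Rightarrow> real \<Rightarrow> bool" where
  "circ_gaussian P Z v \<longleftrightarrow>
     distributed P lborel (\<lambda>w. Re (Z w)) (\<lambda>x. ennreal (normal_density 0 (sqrt (v / 2)) x)) \<and>
     distributed P lborel (\<lambda>w. Im (Z w)) (\<lambda>x. ennreal (normal_density 0 (sqrt (v / 2)) x)) \<and>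
     prob_space.indep_var P borel (\<lambda>w. Re (Z w)) borel (\<lambda>w. Im (Z w))"

end

theory Submission imports Defs begin


lemma (in prob_space) hbi_const: "has_bochner_integral M (\<lambda>_. c) (c::'b::{banach,second_countable_topology})"
  by (simp add: has_bochner_integral_iff prob_space)

lemma (in prob_space) normal_moments:
  fixes x :: "'a \<Rightarrow> real"
  assumes D: "distributed M lborel x (\<lambda>t. ennreal (normal_density 0 \<sigma> t))" and s: "0 < \<sigma>"
  shows "integrable M (\<lambda>w. x w ^ k)"
    and "(\<integral>w. x w ^ (2*k+1) \<partial>M) = 0"
    and "(\<integral>w. x w ^ (2*k) \<partial>M) = fact (2 * k) / ((2 / \<sigma>\<^sup>2)^k * fact k)"
proof -
  have "integrable lborel (\<lambda>t. normal_density 0 \<sigma> t * t ^ k)"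
    using integrable_normal_moment[of \<sigma> 0 k] s by simp
  then show "integrable M (\<lambda>w. x w ^ k)"
    using distributed_integrable[OF D, of "\<lambda>t. t ^ k"] by simp
  show "(\<integral>w. x w ^ (2*k+1) \<partial>M) = 0"
    using distributed_integral[OF D, of "\<lambda>t. t ^ (2*k+1)", symmetric]
      integral_normal_moment_odd[OF s, of 0 k] by simp
  show "(\<integral>w. x w ^ (2*k) \<partial>M) = fact (2 * k) / ((2 / \<sigma>\<^sup>2)^k * fact k)"
    using distributed_integral[OF D, of "\<lambda>t. t ^ (2*k)", symmetric]
      integral_normal_moment_even[OF s, of 0 k] by simp
qed

lemma (in prob_space) normal_poly:
  fixes x :: "'a \<Rightarrow> real"
  assumes D: "distributed M lborel x (\<lambda>t. ennreal (normal_density 0 \<sigma> t))" and s: "0 < \<sigma>"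
  shows "has_bochner_integral M (\<lambda>w. (c + d * x w)^2) (c^2 + d^2*\<sigma>^2)"
    and "has_bochner_integral M (\<lambda>w. (c + d * x w)^4) (c^4 + 6*c^2*d^2*\<sigma>^2 + 3*d^4*\<sigma>^4)"
proof -
  note I = normal_moments(1)[OF D s]
  have m1: "has_bochner_integral M (\<lambda>w. x w ^ 1) 0"
    using normal_moments(2)[OF D s, of 0] I[of 1] by (simp add: has_bochner_integral_iff)
  have m2: "has_bochner_integral M (\<lambda>w. x w ^ 2) (\<sigma>^2)"
    using normal_moments(3)[OF D s, of 1] I[of 2] s by (simp add: has_bochner_integral_iff)
  have m3: "has_bochner_integral M (\<lambda>w. x w ^ 3) 0"
    using normal_moments(2)[OF D s, of 1] I[of 3] by (simp add: has_bochner_integral_iff numeral_3_eq_3)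
  have m4: "has_bochner_integral M (\<lambda>w. x w ^ 4) (3*\<sigma>^4)"
  proof -
    have "fact (2 * 2) / ((2 / \<sigma>\<^sup>2)^2 * fact 2) = 3*\<sigma>^4"
      using s by (simp add: fact_numeral field_simps power2_eq_square power4_eq_xxxx)
    then show ?thesis
      using normal_moments(3)[OF D s, of 2] I[of 4] by (simp add: has_bochner_integral_iff)
  qed
  have e2: "(\<lambda>w. (c + d * x w)^2) = (\<lambda>w. c^2 + (2*c*d) * x w ^ 1 + d^2 * x w ^ 2)"
    by (simp add: fun_eq_iff power2_eq_square algebra_simps)
  have "has_bochner_integral M (\<lambda>w. c^2 + (2*c*d) * x w ^ 1 + d^2 * x w ^ 2) (c^2 + (2*c*d)*0 + d^2*\<sigma>^2)"
    by (intro has_bochner_integral_add has_bochner_integral_mult_right hbi_const m1 m2)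
  then show "has_bochner_integral M (\<lambda>w. (c + d * x w)^2) (c^2 + d^2*\<sigma>^2)"
    unfolding e2 by simp
  have e4: "(\<lambda>w. (c + d * x w)^4) = (\<lambda>w. c^4 + (4*c^3*d) * x w ^ 1 + (6*c^2*d^2) * x w ^ 2
      + (4*c*d^3) * x w ^ 3 + d^4 * x w ^ 4)"
    by (simp add: fun_eq_iff power2_eq_square power3_eq_cube power4_eq_xxxx algebra_simps)
  have "has_bochner_integral M (\<lambda>w. c^4 + (4*c^3*d) * x w ^ 1 + (6*c^2*d^2) * x w ^ 2
      + (4*c*d^3) * x w ^ 3 + d^4 * x w ^ 4) (c^4 + (4*c^3*d)*0 + (6*c^2*d^2)*\<sigma>^2 + (4*c*d^3)*0 + d^4*(3*\<sigma>^4))"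
    by (intro has_bochner_integral_add has_bochner_integral_mult_right hbi_const m1 m2 m3 m4)
  then show "has_bochner_integral M (\<lambda>w. (c + d * x w)^4) (c^4 + 6*c^2*d^2*\<sigma>^2 + 3*d^4*\<sigma>^4)"
    unfolding e4 by (simp add: algebra_simps)
qed


lemma (in prob_space) circ_moments:
  assumes G: "circ_gaussian M Z v" and v: "0 < v"
  shows "has_bochner_integral M (\<lambda>w. a + complex_of_real s * Z w) a"
    and "has_bochner_integral M (\<lambda>w. cnj (a + complex_of_real s * Z w)) (cnj a)"
    and "has_bochner_integral M (\<lambda>w. (a + complex_of_real s * Z w) * cnj (a + complex_of_real s * Z w))
           (of_real ((cmod a)^2 + s^2* v))"
    and "has_bochner_integral M (\<lambda>w. ((a + complex_of_real s * Z w) * cnj (a + complex_of_real s * Z w))^2)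
           (of_real ((cmod a)^4 + 4* (cmod a)^2* s^2* v + 2* s^4* v^2))"
proof -
  define \<sigma> where "\<sigma> = sqrt (v/2)"
  have sp: "0 < \<sigma>" using v by (simp add: \<sigma>_def)
  have s2: "\<sigma>^2 = v/2" using v by (simp add: \<sigma>_def)
  define x where "x = (\<lambda>w. Re (Z w))"
  define y where "y = (\<lambda>w. Im (Z w))"
  have Dx: "distributed M lborel x (\<lambda>t. ennreal (normal_density 0 \<sigma> t))"
    and Dy: "distributed M lborel y (\<lambda>t. ennreal (normal_density 0 \<sigma> t))"
    and Ixy: "indep_var borel x borel y"
    using G unfolding circ_gaussian_def x_def y_def \<sigma>_def by auto
  have x1: "has_bochner_integral M x 0"
    using normal_moments(2)[OF Dx sp, of 0] normal_moments(1)[OF Dx sp, of 1]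
    by (simp add: has_bochner_integral_iff)
  have y1: "has_bochner_integral M y 0"
    using normal_moments(2)[OF Dy sp, of 0] normal_moments(1)[OF Dy sp, of 1]
    by (simp add: has_bochner_integral_iff)
  have eW: "(\<lambda>w. a + complex_of_real s * Z w) = (\<lambda>w. a + complex_of_real s * (complex_of_real (x w) + \<i> * complex_of_real (y w)))"
    by (simp add: fun_eq_iff x_def y_def complex_eq_iff)
  have "has_bochner_integral M (\<lambda>w. a + complex_of_real s * (complex_of_real (x w) + \<i> * complex_of_real (y w)))
         (a + complex_of_real s * (complex_of_real 0 + \<i> * complex_of_real 0))"
    by (intro has_bochner_integral_add has_bochner_integral_mult_right hbi_const
        has_bochner_integral_of_real x1 y1)
  then show W1: "has_bochner_integral M (\<lambda>w. a + complex_of_real s * Z w) a"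
    unfolding eW by simp
  show "has_bochner_integral M (\<lambda>w. cnj (a + complex_of_real s * Z w)) (cnj a)"
    using has_bochner_integral_cnj[OF W1] .
  define A where "A = (\<lambda>w. (Re a + s * x w)^2)"
  define B where "B = (\<lambda>w. (Im a + s * y w)^2)"
  have eq2: "(\<lambda>w. (a + complex_of_real s * Z w) * cnj (a + complex_of_real s * Z w)) = (\<lambda>w. complex_of_real (A w + B w))"
    by (rule ext, subst complex_mult_cnj) (simp add: A_def B_def x_def y_def)
  have hA: "has_bochner_integral M A ((Re a)^2 + s^2* \<sigma>^2)"
    unfolding A_def by (rule normal_poly(1)[OF Dx sp])
  have hB: "has_bochner_integral M B ((Im a)^2 + s^2* \<sigma>^2)"
    unfolding B_def by (rule normal_poly(1)[OF Dy sp])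
  have "has_bochner_integral M (\<lambda>w. complex_of_real (A w + B w)) (of_real ((Re a)^2 + s^2* \<sigma>^2 + ((Im a)^2 + s^2* \<sigma>^2)))"
    by (intro has_bochner_integral_of_real has_bochner_integral_add hA hB)
  moreover have "(Re a)^2 + s^2* \<sigma>^2 + ((Im a)^2 + s^2* \<sigma>^2) = (cmod a)^2 + s^2* v"
    by (simp add: s2 cmod_power2)
  ultimately show "has_bochner_integral M (\<lambda>w. (a + complex_of_real s * Z w) * cnj (a + complex_of_real s * Z w))
           (of_real ((cmod a)^2 + s^2* v))" unfolding eq2 by simp
  have IAB: "indep_var borel A borel B"
  proof -
    have "indep_var borel ((\<lambda>t. (Re a + s * t)^2) \<circ> x) borel ((\<lambda>t. (Im a + s * t)^2) \<circ> y)"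
      by (rule indep_var_compose[OF Ixy]) auto
    then show ?thesis by (simp add: A_def B_def comp_def)
  qed
  have hAB: "has_bochner_integral M (\<lambda>w. A w * B w) (((Re a)^2 + s^2* \<sigma>^2) * ((Im a)^2 + s^2* \<sigma>^2))"
    using indep_var_lebesgue_integral[OF IAB] indep_var_integrable[OF IAB] hA hB
    by (auto simp: has_bochner_integral_iff)
  have hA2: "has_bochner_integral M (\<lambda>w. (A w)^2) ((Re a)^4 + 6* (Re a)^2* s^2* \<sigma>^2 + 3* s^4* \<sigma>^4)"
    using normal_poly(2)[OF Dx sp, of "Re a" s] by (simp add: A_def power_mult[symmetric])
  have hB2: "has_bochner_integral M (\<lambda>w. (B w)^2) ((Im a)^4 + 6* (Im a)^2* s^2* \<sigma>^2 + 3* s^4* \<sigma>^4)"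
    using normal_poly(2)[OF Dy sp, of "Im a" s] by (simp add: B_def power_mult[symmetric])
  have eq4: "(\<lambda>w. ((a + complex_of_real s * Z w) * cnj (a + complex_of_real s * Z w))^2)
     = (\<lambda>w. complex_of_real ((A w)^2 + 2 * (A w * B w) + (B w)^2))"
  proof (rule ext)
    fix w
    have "(a + complex_of_real s * Z w) * cnj (a + complex_of_real s * Z w) = complex_of_real (A w + B w)"
      using fun_cong[OF eq2, of w] by simp
    moreover have "(complex_of_real (A w + B w))^2 = complex_of_real ((A w)^2 + 2 * (A w * B w) + (B w)^2)"
      by (simp add: power2_eq_square power4_eq_xxxx algebra_simps)
    ultimately show "((a + complex_of_real s * Z w) * cnj (a + complex_of_real s * Z w))^2
       = complex_of_real ((A w)^2 + 2 * (A w * B w) + (B w)^2)" by simp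
  qed
  have "has_bochner_integral M (\<lambda>w. complex_of_real ((A w)^2 + 2 * (A w * B w) + (B w)^2))
     (of_real (((Re a)^4 + 6* (Re a)^2* s^2* \<sigma>^2 + 3* s^4* \<sigma>^4) + 2 * (((Re a)^2 + s^2* \<sigma>^2) * ((Im a)^2 + s^2* \<sigma>^2))
       + ((Im a)^4 + 6* (Im a)^2* s^2* \<sigma>^2 + 3* s^4* \<sigma>^4)))"
    by (intro has_bochner_integral_of_real has_bochner_integral_add has_bochner_integral_mult_right hA2 hB2 hAB)
  moreover have "((Re a)^4 + 6* (Re a)^2* s^2* \<sigma>^2 + 3* s^4* \<sigma>^4) + 2 * (((Re a)^2 + s^2* \<sigma>^2) * ((Im a)^2 + s^2* \<sigma>^2))
       + ((Im a)^4 + 6* (Im a)^2* s^2* \<sigma>^2 + 3* s^4* \<sigma>^4) = (cmod a)^4 + 4* (cmod a)^2* s^2* v + 2* s^4* v^2"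
  proof -
    have "(cmod a)^4 = ((cmod a)^2)^2" by simp
    then have "(cmod a)^4 = ((Re a)^2 + (Im a)^2)^2" by (simp only: cmod_power2)
    have "\<sigma>^4 = (\<sigma>^2)^2" by simp
    then have "\<sigma>^4 = (v/2)^2" using s2 by simp
    show ?thesis unfolding \<open>(cmod a)^4 = ((Re a)^2 + (Im a)^2)^2\<close> \<open>\<sigma>^4 = (v/2)^2\<close> cmod_power2 s2
      by (simp add: power2_eq_square power4_eq_xxxx algebra_simps)
  qed
  ultimately show "has_bochner_integral M (\<lambda>w. ((a + complex_of_real s * Z w) * cnj (a + complex_of_real s * Z w))^2)
           (of_real ((cmod a)^4 + 4* (cmod a)^2* s^2* v + 2* s^4* v^2))" unfolding eq4 by simp
qed


lemma (in prob_space) indep_prod: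
  fixes Xf :: "'i \<Rightarrow> 'a \<Rightarrow> complex" and G :: "'i \<Rightarrow> complex \<Rightarrow> complex"
  assumes ind: "indep_vars (\<lambda>_. borel) Xf K" and IK: "I \<subseteq> K" and fin: "finite I"
    and meas: "\<And>p. p \<in> I \<Longrightarrow> G p \<in> borel_measurable borel"
    and int: "\<And>p. p \<in> I \<Longrightarrow> integrable M (\<lambda>w. G p (Xf p w))"
  shows "has_bochner_integral M (\<lambda>w. \<Prod>p\<in>I. G p (Xf p w)) (\<Prod>p\<in>I. integral\<^sup>L M (\<lambda>w. G p (Xf p w)))"
proof -
  have "indep_vars (\<lambda>_. borel) Xf I" by (rule indep_vars_subset[OF ind IK])
  then have i2: "indep_vars (\<lambda>_. borel) (\<lambda>p w. G p (Xf p w)) I"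
    by (rule indep_vars_compose2) (rule meas)
  show ?thesis
    using indep_vars_lebesgue_integral[OF fin i2 int] indep_vars_integrable[OF fin i2 int]
    by (simp add: has_bochner_integral_iff)
qed


definition Ecorr :: "real \<Rightarrow> real \<Rightarrow> (nat \<Rightarrow> nat \<Rightarrow> real) \<Rightarrow> nat \<Rightarrow> nat \<Rightarrow> nat \<Rightarrow> nat \<Rightarrow> real" where
  "Ecorr s2 v w i j mu nu = (if i = j then s2 * v * (w i mu + w i nu) else 0)
     + (if mu = nu then s2 * v * (w i mu + w j mu) else 0)
     + s2^2 * v^2 * ((if i = j then 1 else 0) + (if mu = nu then 1 else 0))"

lemma term_exp:
  fixes X :: "nat \<Rightarrow> nat \<Rightarrow> 'w \<Rightarrow> complex" and a :: "nat \<Rightarrow> nat \<Rightarrow> complex"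
  assumes PS: "prob_space P"
    and ind: "prob_space.indep_vars P (\<lambda>_. borel) (\<lambda>(i, mu). X i mu) ({..<N} \<times> {..<M})"
    and G: "\<And>i mu. i < N \<Longrightarrow> mu < M \<Longrightarrow> circ_gaussian P (X i mu) v" and v: "0 < v"
    and ij: "i < N" "j < N" "mu < M" "nu < M"
  shows "has_bochner_integral P (\<lambda>w. ((a i mu + of_real s * X i mu w) * cnj (a j mu + of_real s * X j mu w))
            * ((a j nu + of_real s * X j nu w) * cnj (a i nu + of_real s * X i nu w)))
     (a i mu * cnj (a j mu) * (a j nu * cnj (a i nu)) + of_real (Ecorr (s^2) v (\<lambda>i mu. (cmod (a i mu))^2) i j mu nu))"
proof -
  interpret prob_space P by (rule PS)
  define XX where "XX = (\<lambda>(i, mu). X i mu)"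
  have XX: "XX (k, l) = X k l" for k l by (simp add: XX_def)
  define Y where "Y = (\<lambda>p t. a (fst p) (snd p) + complex_of_real s * t)"
  have Y: "Y (k,l) t = a k l + complex_of_real s * t" for k l t by (simp add: Y_def)
  note cm = circ_moments[OF G v]
  have h1: "k < N \<Longrightarrow> l < M \<Longrightarrow> has_bochner_integral P (\<lambda>w. a k l + complex_of_real s * X k l w) (a k l)" for k l
    using cm(1) .
  have h2: "k < N \<Longrightarrow> l < M \<Longrightarrow> has_bochner_integral P (\<lambda>w. cnj (a k l + complex_of_real s * X k l w)) (cnj (a k l))" for k l
    using cm(2) .
  have h3: "k < N \<Longrightarrow> l < M \<Longrightarrow> has_bochner_integral P (\<lambda>w. (a k l + complex_of_real s * X k l w) * cnj (a k l + complex_of_real s * X k l w)) (of_real ((cmod (a k l))^2 + s^2 * v))" for k l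
    using cm(3) .
  have h4: "k < N \<Longrightarrow> l < M \<Longrightarrow> has_bochner_integral P (\<lambda>w. ((a k l + complex_of_real s * X k l w) * cnj (a k l + complex_of_real s * X k l w))^2) (of_real ((cmod (a k l))^4 + 4 * (cmod (a k l))^2 * s^2 * v + 2 * s^4 * v^2))" for k l
    using cm(4) .
  have h1i: "k < N \<Longrightarrow> l < M \<Longrightarrow> integrable P (\<lambda>w. a k l + complex_of_real s * X k l w)" for k l
    using h1 by (simp add: has_bochner_integral_iff)
  have h2i: "k < N \<Longrightarrow> l < M \<Longrightarrow> integrable P (\<lambda>w. cnj (a k l + complex_of_real s * X k l w))" for k l
    using h2[of k l] by (simp only: has_bochner_integral_iff)
  have h3i: "k < N \<Longrightarrow> l < M \<Longrightarrow> integrable P (\<lambda>w. (a k l + complex_of_real s * X k l w) * cnj (a k l + complex_of_real s * X k l w))" for k l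
    using h3[of k l] by (simp only: has_bochner_integral_iff)
  have ind': "indep_vars (\<lambda>_. borel) XX ({..<N} \<times> {..<M})" using ind by (simp add: XX_def)
  have sq: "z * cnj z = complex_of_real ((cmod z)^2)" for z by (metis complex_norm_square of_real_power)
  show ?thesis
  proof (cases "i = j")
    case True
    note ij' = True
    show ?thesis
    proof (cases "mu = nu")
      case True
      have "has_bochner_integral P (\<lambda>w. ((a i mu + complex_of_real s * X i mu w) * cnj (a i mu + complex_of_real s * X i mu w))^2) (of_real ((cmod (a i mu))^4 + 4 * (cmod (a i mu))^2 * s^2 * v + 2 * s^4 * v^2))"
        using h4 ij by blast
      moreover have "a i mu * cnj (a i mu) * (a i mu * cnj (a i mu)) + of_real (Ecorr (s^2) v (\<lambda>i mu. (cmod (a i mu))^2) i i mu mu) = of_real ((cmod (a i mu))^4 + 4 * (cmod (a i mu))^2 * s^2 * v + 2 * s^4 * v^2)"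
        unfolding sq Ecorr_def by (simp add: power2_eq_square power4_eq_xxxx algebra_simps flip: of_real_mult of_real_add)
      ultimately show ?thesis using ij' True by (simp add: power2_eq_square)
    next
      case False
      define Gf where "Gf = (\<lambda>p t. Y p t * cnj (Y p t))"
      have "has_bochner_integral P (\<lambda>w. \<Prod>p\<in>{(i,mu),(i,nu)}. Gf p (XX p w)) (\<Prod>p\<in>{(i,mu),(i,nu)}. integral\<^sup>L P (\<lambda>w. Gf p (XX p w)))"
        apply (rule indep_prod[OF ind'])
        using ij apply auto[1]
         apply simp
        apply (auto simp: Gf_def Y_def intro!: borel_measurable_continuous_onI continuous_intros)[1]
        using ij by (auto simp only: Gf_def Y XX insert_iff empty_iff intro: h3i)
      then have "has_bochner_integral P (\<lambda>w. ((a i mu + complex_of_real s * X i mu w) * cnj (a i mu + complex_of_real s * X i mu w)) * ((a i nu + complex_of_real s * X i nu w) * cnj (a i nu + complex_of_real s * X i nu w)))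
          (of_real ((cmod (a i mu))^2 + s^2 * v) * of_real ((cmod (a i nu))^2 + s^2 * v))"
        using False ij h3[THEN has_bochner_integral_integral_eq] by (simp add: Gf_def Y XX)
      moreover have "a i mu * cnj (a i mu) * (a i nu * cnj (a i nu)) + of_real (Ecorr (s^2) v (\<lambda>i mu. (cmod (a i mu))^2) i i mu nu) = of_real ((cmod (a i mu))^2 + s^2 * v) * of_real ((cmod (a i nu))^2 + s^2 * v)"
        unfolding sq Ecorr_def using False by (simp add: power2_eq_square algebra_simps flip: of_real_mult of_real_add)
      ultimately show ?thesis using ij' by simp
    qed
  next
    case False
    note ij' = False
    show ?thesis
    proof (cases "mu = nu")
      case True
      define Gf where "Gf = (\<lambda>p t. Y p t * cnj (Y p t))"
      have "has_bochner_integral P (\<lambda>w. \<Prod>p\<in>{(i,mu),(j,mu)}. Gf p (XX p w)) (\<Prod>p\<in>{(i,mu),(j,mu)}. integral\<^sup>L P (\<lambda>w. Gf p (XX p w)))"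
        apply (rule indep_prod[OF ind'])
        using ij apply auto[1]
         apply simp
        apply (auto simp: Gf_def Y_def intro!: borel_measurable_continuous_onI continuous_intros)[1]
        using ij by (auto simp only: Gf_def Y XX insert_iff empty_iff intro: h3i)
      then have "has_bochner_integral P (\<lambda>w. ((a i mu + complex_of_real s * X i mu w) * cnj (a i mu + complex_of_real s * X i mu w)) * ((a j mu + complex_of_real s * X j mu w) * cnj (a j mu + complex_of_real s * X j mu w)))
          (of_real ((cmod (a i mu))^2 + s^2 * v) * of_real ((cmod (a j mu))^2 + s^2 * v))"
        using False ij h3[THEN has_bochner_integral_integral_eq] by (simp add: Gf_def Y XX)
      moreover have "a i mu * cnj (a j mu) * (a j mu * cnj (a i mu)) + of_real (Ecorr (s^2) v (\<lambda>i mu. (cmod (a i mu))^2) i j mu mu) = of_real ((cmod (a i mu))^2 + s^2 * v) * of_real ((cmod (a j mu))^2 + s^2 * v)"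
      proof -
        have "a i mu * cnj (a j mu) * (a j mu * cnj (a i mu)) = (a i mu * cnj (a i mu)) * (a j mu * cnj (a j mu))"
          by (simp add: ac_simps)
        then show ?thesis
          unfolding Ecorr_def using False by (simp add: sq power2_eq_square algebra_simps flip: of_real_mult of_real_add)
      qed
      moreover have "(\<lambda>w. ((a i mu + complex_of_real s * X i mu w) * cnj (a j mu + complex_of_real s * X j mu w)) * ((a j mu + complex_of_real s * X j mu w) * cnj (a i mu + complex_of_real s * X i mu w)))
         = (\<lambda>w. ((a i mu + complex_of_real s * X i mu w) * cnj (a i mu + complex_of_real s * X i mu w)) * ((a j mu + complex_of_real s * X j mu w) * cnj (a j mu + complex_of_real s * X j mu w)))"
        by (simp add: fun_eq_iff ac_simps)
      ultimately show ?thesis using True by simp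
    next
      case False
      define Gf where "Gf = (\<lambda>p t. if p = (j,mu) \<or> p = (i,nu) then cnj (Y p t) else Y p t)"
      have neq: "mu \<noteq> nu" "nu \<noteq> mu" "i \<noteq> j" "j \<noteq> i" "(nu = mu) = False" "(mu = nu) = False" "(i = j) = False" "(j = i) = False" using False ij' by auto
      have "has_bochner_integral P (\<lambda>w. \<Prod>p\<in>{(i,mu),(j,mu),(j,nu),(i,nu)}. Gf p (XX p w)) (\<Prod>p\<in>{(i,mu),(j,mu),(j,nu),(i,nu)}. integral\<^sup>L P (\<lambda>w. Gf p (XX p w)))"
        apply (rule indep_prod[OF ind'])
        using ij apply auto[1]
         apply simp
        apply (auto simp: Gf_def Y_def neq intro!: borel_measurable_continuous_onI continuous_intros)[1]
        using ij by (auto simp only: Gf_def Y XX insert_iff empty_iff if_True if_False prod.inject simp_thms neq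
          intro: h1i h2i)
      then have "has_bochner_integral P (\<lambda>w. (a i mu + complex_of_real s * X i mu w) * (cnj (a j mu + complex_of_real s * X j mu w) * ((a j nu + complex_of_real s * X j nu w) * cnj (a i nu + complex_of_real s * X i nu w))))
          (a i mu * (cnj (a j mu) * (a j nu * cnj (a i nu))))"
        using False ij' ij h1[THEN has_bochner_integral_integral_eq] h2[THEN has_bochner_integral_integral_eq]
        by (simp add: Gf_def Y XX del: complex_cnj_add complex_cnj_mult)
      then show ?thesis using False ij' by (simp add: Ecorr_def ac_simps del: complex_cnj_add complex_cnj_mult)
    qed
  qed
qed


lemma sum_Ecorr:
  assumes W: "(\<Sum>i<N. \<Sum>mu<M. w i mu) = W"
  shows "(\<Sum>i<N. \<Sum>j<N. \<Sum>mu<M. \<Sum>nu<M. Ecorr s2 v w i j mu nu)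
     = s2 * v * (2 * real M * W + 2 * real N * W) + s2^2 * v^2 * (real N * real M * real M + real N * real N * real M)"
proof -
  have p1: "(\<Sum>i<N. \<Sum>j<N. \<Sum>mu<M. \<Sum>nu<M. (if i = j then s2 * v * (w i mu + w i nu) else 0)) = s2 * v * (2 * real M * W)"
  proof -
    have "\<And>i j. (\<Sum>mu<M. \<Sum>nu<M. (if i = j then s2 * v * (w i mu + w i nu) else 0))
        = (if i = j then (\<Sum>mu<M. \<Sum>nu<M. s2 * v * (w i mu + w i nu)) else 0)" by auto
    then have "(\<Sum>i<N. \<Sum>j<N. \<Sum>mu<M. \<Sum>nu<M. (if i = j then s2 * v * (w i mu + w i nu) else 0))
       = (\<Sum>i<N. \<Sum>mu<M. \<Sum>nu<M. s2 * v * (w i mu + w i nu))" by simp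
    also have "\<dots> = (\<Sum>i<N. s2 * v * (2 * real M * (\<Sum>mu<M. w i mu)))"
      by (simp add: sum.distrib sum_distrib_left[symmetric] algebra_simps)
    also have "\<dots> = s2 * v * (2 * real M * W)"
      using W by (simp add: sum_distrib_left[symmetric])
    finally show ?thesis .
  qed
  have p2: "(\<Sum>i<N. \<Sum>j<N. \<Sum>mu<M. \<Sum>nu<M. (if mu = nu then s2 * v * (w i mu + w j mu) else 0)) = s2 * v * (2 * real N * W)"
  proof -
    have "(\<Sum>i<N. \<Sum>j<N. \<Sum>mu<M. \<Sum>nu<M. (if mu = nu then s2 * v * (w i mu + w j mu) else 0))
       = (\<Sum>i<N. \<Sum>j<N. \<Sum>mu<M. s2 * v * (w i mu + w j mu))" by simp
    also have "\<dots> = (\<Sum>i<N. \<Sum>j<N. s2 * v * ((\<Sum>mu<M. w i mu) + (\<Sum>mu<M. w j mu)))"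
      by (simp add: sum.distrib sum_distrib_left[symmetric])
    also have "\<dots> = (\<Sum>i<N. s2 * v * (real N * (\<Sum>mu<M. w i mu) + W))"
      using W by (simp add: sum.distrib sum_distrib_left[symmetric])
    also have "\<dots> = s2 * v * (2 * real N * W)"
      using W by (simp add: sum.distrib sum_distrib_left[symmetric] algebra_simps)
    finally show ?thesis .
  qed
  have p3: "(\<Sum>i<N. \<Sum>j<N. \<Sum>mu<M. \<Sum>nu<M. s2^2 * v^2 * ((if i = j then 1 else 0) + (if mu = nu then 1 else 0)))
      = s2^2 * v^2 * (real N * real M * real M + real N * real N * real M)"
    by (simp add: sum.distrib sum_distrib_left[symmetric] algebra_simps)
  show ?thesis
    unfolding Ecorr_def sum.distrib p1 p2 p3 by (simp add: algebra_simps)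
qed



theorem mainTheorem1:
  fixes N M :: nat
    and P :: "'w measure"
    and X :: "nat \<Rightarrow> nat \<Rightarrow> 'w \<Rightarrow> complex"
    and phi0 :: "nat \<Rightarrow> nat \<Rightarrow> complex"
    and \<epsilon> :: real
  assumes "0 < N" and "N \<le> M"
    and "sqnorm N M phi0 = 1"
    and "prob_space P"
    and "prob_space.indep_vars P (\<lambda>_. borel) (\<lambda>(i, mu). X i mu) ({..<N} \<times> {..<M})"
    and "\<And>i mu. i < N \<Longrightarrow> mu < M \<Longrightarrow> circ_gaussian P (X i mu) (1 / (real N * real M))"
    and "0 \<le> \<epsilon>" and "\<epsilon> \<le> 1"
  shows "(\<integral>w. local_purity N M
            (\<lambda>i mu. complex_of_real \<epsilon> * phi0 i mu
                     + complex_of_real (sqrt (1 - \<epsilon>\<^sup>2)) * X i mu w) \<partial>P)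
         = complex_of_real (\<epsilon> ^ 4) * local_purity N M phi0
             + complex_of_real ((1 - \<epsilon> ^ 4) * ((real M + real N) / (real M * real N)))"
  proof -
  interpret prob_space P by fact
  define a where "a = (\<lambda>i mu. complex_of_real \<epsilon> * phi0 i mu)"
  define s where "s = sqrt (1 - \<epsilon>\<^sup>2)"
  define v where "v = 1 / (real N * real M)"
  have Mpos: "0 < M" using assms(1,2) by simp
  have vpos: "0 < v" using assms(1) Mpos by (simp add: v_def)
  have G: "\<And>i mu. i < N \<Longrightarrow> mu < M \<Longrightarrow> circ_gaussian P (X i mu) v"
    using assms(6) by (simp add: v_def)
  have expand: "\<And>f. local_purity N M f = (\<Sum>i<N. \<Sum>j<N. \<Sum>mu<M. \<Sum>nu<M. (f i mu * cnj (f j mu)) * (f j nu * cnj (f i nu)))"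
    by (simp add: local_purity_def ptrace_B_def sum_product)
  have H: "has_bochner_integral P (\<lambda>w. local_purity N M (\<lambda>i mu. a i mu + complex_of_real s * X i mu w))
     (\<Sum>i<N. \<Sum>j<N. \<Sum>mu<M. \<Sum>nu<M. (a i mu * cnj (a j mu) * (a j nu * cnj (a i nu))
        + complex_of_real (Ecorr (s^2) v (\<lambda>i mu. (cmod (a i mu))^2) i j mu nu)))"
    unfolding expand
    by (intro has_bochner_integral_sum term_exp[OF assms(4) assms(5) G vpos]) auto
  have S1: "(\<Sum>i<N. \<Sum>j<N. \<Sum>mu<M. \<Sum>nu<M. a i mu * cnj (a j mu) * (a j nu * cnj (a i nu)))
      = complex_of_real (\<epsilon> ^ 4) * local_purity N M phi0"
    unfolding expand a_def by (simp add: sum_distrib_left power4_eq_xxxx ac_simps)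
  have W: "(\<Sum>i<N. \<Sum>mu<M. (cmod (a i mu))^2) = \<epsilon>^2"
    using assms(3) unfolding a_def sqnorm_def by (simp add: norm_mult power_mult_distrib sum_distrib_left[symmetric])
  have S2: "(\<Sum>i<N. \<Sum>j<N. \<Sum>mu<M. \<Sum>nu<M. Ecorr (s^2) v (\<lambda>i mu. (cmod (a i mu))^2) i j mu nu)
      = (1 - \<epsilon> ^ 4) * ((real M + real N) / (real M * real N))"
  proof -
    have s2: "s^2 = 1 - \<epsilon>^2" using assms(7,8) by (simp add: s_def power_le_one)
    have "(\<Sum>i<N. \<Sum>j<N. \<Sum>mu<M. \<Sum>nu<M. Ecorr (s^2) v (\<lambda>i mu. (cmod (a i mu))^2) i j mu nu)
       = s^2 * v * (2 * real M * \<epsilon>^2 + 2 * real N * \<epsilon>^2) + (s^2)^2 * v^2 * (real N * real M * real M + real N * real N * real M)"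
      by (rule sum_Ecorr[OF W])
    also have "\<dots> = (1 - \<epsilon> ^ 4) * ((real M + real N) / (real M * real N))"
      unfolding s2 v_def using assms(1) Mpos
      by (simp add: field_simps power2_eq_square power4_eq_xxxx)
    finally show ?thesis .
  qed
  have "(\<integral>w. local_purity N M (\<lambda>i mu. a i mu + complex_of_real s * X i mu w) \<partial>P)
     = complex_of_real (\<epsilon> ^ 4) * local_purity N M phi0
             + complex_of_real ((1 - \<epsilon> ^ 4) * ((real M + real N) / (real M * real N)))"
    using H[THEN has_bochner_integral_integral_eq] S1 S2
    by (simp add: sum.distrib flip: of_real_sum)
  then show ?thesis by (simp add: a_def s_def)
qed

end
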